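(* Let $\mathbb X,\mathbb Y$ be Euclidean spaces, $\varphi\colon\mathbb X\to\mathbb R$ locally Lipschitz, $\Phi\colon\mathbb X\rightrightarrows\mathbb Y$ with closed graph, $\bar y\in\operatorname{Im}\Phi$, and let $\bar x$ be a local minimizer of (P): $\min\{\varphi(x)\mid\bar y\in\Phi(x)\}$ such that, for each critical direction $u\in\mathbb S_{\mathbb X}$ for (P) at $\bar x$, $\Phi$ is asymptotically regular at $(\bar x,\bar y)$ in direction $u$. Then $\bar x$ is M-stationary, i.e., $0\in\partial\varphi(\bar x)+D^*\Phi(\bar x,\bar y)(\lambda)$ for some $\lambda\in\mathbb Y$.
   Context: $\partial$ is the limiting subdifferential; $D^*\Phi(x,y)(y^* )=\{x^*\mid(x^*,-y^* )\in\mathcal N_{\operatorname{gph}\Phi}(x,y)\}$ (limiting coderivative), $\widehat D^*$ the same with the regular normal cone. $u$ is a critical direction for (P) at $\bar x$ if there are $u_k\to u$, $\alpha_k\to0$, $v_k\to0$, $t_k\downarrow0$ with $\varphi(\bar x+t_ku_k)\le\varphi(\bar x)+t_k\|u_k\|\alpha_k$ and $\bar y+t_k\|u_k\|v_k\in\Phi(\bar x+t_ku_k)$. $\Phi$ is asymptotically regular at $(\bar x,\bar y)$ in direction $u\in\mathbb S_{\mathbb X}$ if for all sequences $(x_k,y_k)\in\operatorname{gph}\Phi$, $x_k^*$, $\lambda_k$ and $x^*$, $y^*$ with $x_k\notin\Phi^{-1}(\bar y)$, $y_k\ne\bar y$, $x_k^*\in\widehat D^*\Phi(x_k,y_k)(\lambda_k)$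 for all $k$ and $x_k\to\bar x$, $y_k\to\bar y$, $x_k^*\to x^*$, $\frac{x_k-\bar x}{\|x_k-\bar x\|}\to u$, $\frac{y_k-\bar y}{\|x_k-\bar x\|}\to0$, $\frac{\|y_k-\bar y\|}{\|x_k-\bar x\|}\lambda_k\to y^*$, $\|\lambda_k\|\to\infty$, $\frac{y_k-\bar y}{\|y_k-\bar y\|}-\frac{\lambda_k}{\|\lambda_k\|}\to0$, one has $x^*\in\operatorname{Im}D^*\Phi(\bar x,\bar y)=\bigcup_{\lambda}D^*\Phi(\bar x,\bar y)(\lambda)$. *)

theory Defs
  imports "HOL-Analysis.Analysis"
begin

definition gph :: "('a \<Rightarrow> 'b set) \<Rightarrow> ('a \<times> 'b) set" where
  "gph \<Phi> = {(x, y). y \<in> \<Phi> x}"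

definition reg_normal_cone :: "'a::euclidean_space set \<Rightarrow> 'a \<Rightarrow> 'a set" where
  "reg_normal_cone \<Omega> z = {zs. z \<in> \<Omega> \<and>
     (\<forall>e>0. \<exists>d>0. \<forall>z'\<in>\<Omega>. norm (z' - z) < d \<longrightarrow> zs \<bullet> (z' - z) \<le> e * norm (z' - z))}"

definition lim_normal_cone :: "'a::euclidean_space set \<Rightarrow> 'a \<Rightarrow> 'a set" where
  "lim_normal_cone \<Omega> z = {zs. z \<in> \<Omega> \<and>
     (\<exists>zk zsk. (\<forall>k. zk k \<in> \<Omega> \<and> zsk k \<in> reg_normal_cone \<Omega> (zk k)) \<and>
        zk \<longlonglongrightarrow> z \<and> zsk \<longlonglongrightarrow> zs)}"

definition reg_coderiv :: "('a::euclidean_space \<Rightarrow> 'b::euclidean_space set) \<Rightarrow> 'a \<Rightarrow> 'b \<Rightarrow> 'b \<Rightarrow> 'a set" where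
  "reg_coderiv \<Phi> x y ys = {xs. (xs, - ys) \<in> reg_normal_cone (gph \<Phi>) (x, y)}"

definition lim_coderiv :: "('a::euclidean_space \<Rightarrow> 'b::euclidean_space set) \<Rightarrow> 'a \<Rightarrow> 'b \<Rightarrow> 'b \<Rightarrow> 'a set" where
  "lim_coderiv \<Phi> x y ys = {xs. (xs, - ys) \<in> lim_normal_cone (gph \<Phi>) (x, y)}"

definition im_lim_coderiv :: "('a::euclidean_space \<Rightarrow> 'b::euclidean_space set) \<Rightarrow> 'a \<Rightarrow> 'b \<Rightarrow> 'a set" where
  "im_lim_coderiv \<Phi> x y = (\<Union>l. lim_coderiv \<Phi> x y l)"

definition reg_subdiff :: "('a::euclidean_space \<Rightarrow> real) \<Rightarrow> 'a \<Rightarrow> 'a set" where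
  "reg_subdiff f x = {xs. \<forall>e>0. \<exists>d>0. \<forall>x'. norm (x' - x) < d \<longrightarrow>
      f x' - f x - xs \<bullet> (x' - x) \<ge> - e * norm (x' - x)}"

definition lim_subdiff :: "('a::euclidean_space \<Rightarrow> real) \<Rightarrow> 'a \<Rightarrow> 'a set" where
  "lim_subdiff f x = {xs. \<exists>xk xsk. (\<forall>k. xsk k \<in> reg_subdiff f (xk k)) \<and>
      xk \<longlonglongrightarrow> x \<and> (\<lambda>k. f (xk k)) \<longlonglongrightarrow> f x \<and> xsk \<longlonglongrightarrow> xs}"

definition locally_lipschitz :: "('a::metric_space \<Rightarrow> real) \<Rightarrow> bool" where
  "locally_lipschitz f \<longleftrightarrow> (\<forall>x. \<exists>d>0. \<exists>L. L-lipschitz_on (ball x d) f)"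

definition local_minimizer_P :: "('a::euclidean_space \<Rightarrow> real) \<Rightarrow> ('a \<Rightarrow> 'b set) \<Rightarrow> 'b \<Rightarrow> 'a \<Rightarrow> bool" where
  "local_minimizer_P \<phi> \<Phi> yb xb \<longleftrightarrow> yb \<in> \<Phi> xb \<and>
     (\<exists>d>0. \<forall>x. yb \<in> \<Phi> x \<and> dist x xb < d \<longrightarrow> \<phi> xb \<le> \<phi> x)"

definition critical_direction :: "('a::euclidean_space \<Rightarrow> real) \<Rightarrow> ('a \<Rightarrow> 'b::euclidean_space set) \<Rightarrow> 'b \<Rightarrow> 'a \<Rightarrow> 'a \<Rightarrow> bool" where
  "critical_direction \<phi> \<Phi> yb xb u \<longleftrightarrow>
     (\<exists>uk (\<alpha>k::nat \<Rightarrow> real) vk (tk::nat \<Rightarrow> real).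
        uk \<longlonglongrightarrow> u \<and> \<alpha>k \<longlonglongrightarrow> 0 \<and> vk \<longlonglongrightarrow> 0 \<and> (\<forall>k. tk k > 0) \<and> tk \<longlonglongrightarrow> 0 \<and>
        (\<forall>k. \<phi> (xb + tk k *\<^sub>R uk k) \<le> \<phi> xb + tk k * norm (uk k) * \<alpha>k k \<and>
             yb + (tk k * norm (uk k)) *\<^sub>R vk k \<in> \<Phi> (xb + tk k *\<^sub>R uk k)))"

definition asymptotically_regular :: "('a::euclidean_space \<Rightarrow> 'b::euclidean_space set) \<Rightarrow> 'a \<Rightarrow> 'b \<Rightarrow> 'a \<Rightarrow> bool" where
  "asymptotically_regular \<Phi> xb yb u \<longleftrightarrow>
     (\<forall>xk yk xsk lk xs ys.
        (\<forall>k. yk k \<in> \<Phi> (xk k) \<and> yb \<notin> \<Phi> (xk k) \<and> yk k \<noteq> yb \<and>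
             xsk k \<in> reg_coderiv \<Phi> (xk k) (yk k) (lk k)) \<and>
        xk \<longlonglongrightarrow> xb \<and> yk \<longlonglongrightarrow> yb \<and> xsk \<longlonglongrightarrow> xs \<and>
        (\<lambda>k. (1 / norm (xk k - xb)) *\<^sub>R (xk k - xb)) \<longlonglongrightarrow> u \<and>
        (\<lambda>k. (1 / norm (xk k - xb)) *\<^sub>R (yk k - yb)) \<longlonglongrightarrow> 0 \<and>
        (\<lambda>k. (norm (yk k - yb) / norm (xk k - xb)) *\<^sub>R lk k) \<longlonglongrightarrow> ys \<and>
        filterlim (\<lambda>k. norm (lk k)) at_top sequentially \<and>
        (\<lambda>k. (1 / norm (yk k - yb)) *\<^sub>R (yk k - yb) - (1 / norm (lk k)) *\<^sub>R lk k) \<longlonglongrightarrow> 0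
      \<longrightarrow> xs \<in> im_lim_coderiv \<Phi> xb yb)"

definition M_stationary :: "('a::euclidean_space \<Rightarrow> real) \<Rightarrow> ('a \<Rightarrow> 'b::euclidean_space set) \<Rightarrow> 'b \<Rightarrow> 'a \<Rightarrow> bool" where
  "M_stationary \<phi> \<Phi> yb xb \<longleftrightarrow>
     (\<exists>l. \<exists>g\<in>lim_subdiff \<phi> xb. \<exists>h\<in>lim_coderiv \<Phi> xb yb l. g + h = 0)"

end

theory Submission
  imports Defs
begin

lemma sq_expand: "norm (a + b)^2 = norm a^2 + 2 * (a \<bullet> b) + norm b^2" for a b :: "'a::real_inner"
  by (simp add: power2_norm_eq_inner inner_add_left inner_add_right inner_commute)

lemma frequently_subseq:
  fixes P :: "nat \<Rightarrow> bool"
  assumes "\<exists>\<^sub>F k in sequentially. P k"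
  shows "\<exists>r::nat\<Rightarrow>nat. strict_mono r \<and> (\<forall>k. P (r k))"
proof -
  have inf: "infinite {k. P k}" using assms by (metis cofinite_eq_sequentially frequently_cofinite)
  define r where "r = wellorder_class.enumerate {k. P k}"
  have "strict_mono r" unfolding r_def using strict_mono_enumerate[OF inf] .
  moreover have "\<forall>k. P (r k)" unfolding r_def using enumerate_in_set[OF inf] by simp
  ultimately show ?thesis by blast
qed

lemma reg_subdiff_of_min:
  fixes \<phi> :: "'a::euclidean_space \<Rightarrow> real"
  assumes c: "c > 0" and r: "r > 0"
    and m: "\<And>w. norm (w - z) < r \<Longrightarrow> \<phi> z + c * norm (x - z)^2 \<le> \<phi> w + c * norm (x - w)^2"
  shows "(2*c) *\<^sub>R (x - z) \<in> reg_subdiff \<phi> z"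
  unfolding reg_subdiff_def
proof (intro CollectI allI impI)
  fix e :: real assume e: "e > 0"
  show "\<exists>d>0. \<forall>x'. norm (x' - z) < d \<longrightarrow> \<phi> x' - \<phi> z - (2*c) *\<^sub>R (x - z) \<bullet> (x' - z) \<ge> - e * norm (x' - z)"
  proof (intro exI[of _ "min r (e/c)"] conjI allI impI)
    show "min r (e/c) > 0" using r e c by simp
    fix w assume w: "norm (w - z) < min r (e/c)"
    define h where "h = w - z"
    have xw: "x - w = (x - z) + (- h)" unfolding h_def by simp
    have "norm (x - w)^2 = norm ((x - z) + (- h))^2" by (simp only: xw)
    also have "\<dots> = norm (x - z)^2 + 2 * ((x - z) \<bullet> (-h)) + norm (-h)^2" by (rule sq_expand)
    finally have eq: "norm (x - w)^2 = norm (x - z)^2 - 2 * ((x - z) \<bullet> h) + norm h^2" by simp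
    have "\<phi> z + c * norm (x - z)^2 \<le> \<phi> w + c * norm (x - w)^2" using m w by simp
    hence A: "\<phi> w - \<phi> z - (2*c) * ((x - z) \<bullet> h) \<ge> - c * norm h^2" using eq by (simp add: algebra_simps)
    have "c * norm h < e" using w c unfolding h_def by (simp add: field_simps)
    have "c * norm h^2 = (c * norm h) * norm h" by (simp add: power2_eq_square)
    also have "\<dots> \<le> e * norm h" using \<open>c * norm h < e\<close> by (intro mult_right_mono) auto
    finally have "c * norm h^2 \<le> e * norm h" .
    with A show "\<phi> w - \<phi> z - (2*c) *\<^sub>R (x - z) \<bullet> (w - z) \<ge> - e * norm (w - z)"
      unfolding h_def by simp
  qed
qed

lemma reg_normal_of_min:
  fixes x z xb :: "'a::euclidean_space" and y yb :: "'b::euclidean_space"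
  assumes c: "c > 0" and xy: "(x,y) \<in> S" and r: "r > 0"
    and m: "\<And>x' y'. (x',y') \<in> S \<Longrightarrow> norm ((x',y') - (x,y)) < r \<Longrightarrow>
       c*(norm(x - z)^2 + norm(y - yb)^2) + norm(x - xb)^2 \<le> c*(norm(x' - z)^2 + norm(y' - yb)^2) + norm(x' - xb)^2"
  shows "(-((2*c) *\<^sub>R (x - z)) - 2 *\<^sub>R (x - xb), -((2*c) *\<^sub>R (y - yb))) \<in> reg_normal_cone S (x,y)"
  unfolding reg_normal_cone_def
proof (intro CollectI conjI xy allI impI)
  fix e :: real assume e: "e > 0"
  let ?zs = "(-((2*c) *\<^sub>R (x - z)) - 2 *\<^sub>R (x - xb), -((2*c) *\<^sub>R (y - yb)))"
  show "\<exists>d>0. \<forall>p\<in>S. norm (p - (x, y)) < d \<longrightarrow> ?zs \<bullet> (p - (x, y)) \<le> e * norm (p - (x, y))"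
  proof (intro exI[of _ "min r (e/(c+1))"] conjI ballI impI)
    show "min r (e/(c+1)) > 0" using r e c by simp
    fix p assume pS: "p \<in> S" and pn: "norm (p - (x, y)) < min r (e/(c+1))"
    obtain x' y' where p: "p = (x', y')" by force
    define hx where "hx = x' - x"
    define hy where "hy = y' - y"
    have hp: "p - (x,y) = (hx, hy)" unfolding p hx_def hy_def by simp
    have nh: "norm (p - (x,y))^2 = norm hx^2 + norm hy^2" unfolding hp norm_Pair by simp
    have d1: "x' - z = (x - z) + hx" unfolding hx_def by simp
    have d2: "y' - yb = (y - yb) + hy" unfolding hy_def by simp
    have d3: "x' - xb = (x - xb) + hx" unfolding hx_def by simp
    have e1: "norm (x' - z)^2 = norm (x - z)^2 + 2 * ((x - z) \<bullet> hx) + norm hx^2"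
      by (simp only: d1 sq_expand)
    have e2: "norm (y' - yb)^2 = norm (y - yb)^2 + 2 * ((y - yb) \<bullet> hy) + norm hy^2"
      by (simp only: d2 sq_expand)
    have e3: "norm (x' - xb)^2 = norm (x - xb)^2 + 2 * ((x - xb) \<bullet> hx) + norm hx^2"
      by (simp only: d3 sq_expand)
    have M: "c*(norm(x - z)^2 + norm(y - yb)^2) + norm(x - xb)^2 \<le> c*(norm(x' - z)^2 + norm(y' - yb)^2) + norm(x' - xb)^2"
      using m pS pn unfolding p by simp
    have ip: "?zs \<bullet> (p - (x,y)) = - (2*c) * ((x - z) \<bullet> hx) - 2 * ((x - xb) \<bullet> hx) - (2*c) * ((y - yb) \<bullet> hy)"
      unfolding hp inner_Pair inner_diff_left inner_minus_left inner_scaleR_left by simp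
    have "?zs \<bullet> (p - (x,y)) \<le> c * norm hx^2 + c * norm hy^2 + norm hx^2"
    proof -
      have "c*(norm(x - z)^2 + norm(y - yb)^2) + norm(x - xb)^2 \<le>
        c*((norm (x - z)^2 + 2 * ((x - z) \<bullet> hx) + norm hx^2) + (norm (y - yb)^2 + 2 * ((y - yb) \<bullet> hy) + norm hy^2))
         + (norm (x - xb)^2 + 2 * ((x - xb) \<bullet> hx) + norm hx^2)" using M unfolding e1 e2 e3 .
      thus ?thesis unfolding ip by (simp add: distrib_left)
    qed
    also have "\<dots> \<le> (c+1) * norm (p - (x,y))^2" unfolding nh using c by (simp add: algebra_simps)
    also have "\<dots> \<le> e * norm (p - (x,y))"
    proof -
      have "(c+1) * norm (p - (x,y)) \<le> e" using pn c by (simp add: field_simps)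
      have "(c+1) * norm (p - (x,y))^2 = ((c+1) * norm (p - (x,y))) * norm (p - (x,y))" by (simp add: power2_eq_square)
      also have "\<dots> \<le> e * norm (p - (x,y))" using \<open>(c+1) * norm (p - (x,y)) \<le> e\<close> by (intro mult_right_mono) auto
      finally show ?thesis .
    qed
    finally show "?zs \<bullet> (p - (x, y)) \<le> e * norm (p - (x, y))" .
  qed
qed


theorem corollary5p5:
  fixes \<phi> :: "'a::euclidean_space \<Rightarrow> real"
    and \<Phi> :: "'a \<Rightarrow> 'b::euclidean_space set"
    and xb :: 'a and yb :: 'b
  assumes "locally_lipschitz \<phi>"
    and "closed (gph \<Phi>)"
    and "\<exists>x. yb \<in> \<Phi> x"
    and "local_minimizer_P \<phi> \<Phi> yb xb"
    and "\<And>u. norm u = 1 \<Longrightarrow> critical_direction \<phi> \<Phi> yb xb u \<Longrightarrow>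
           asymptotically_regular \<Phi> xb yb u"
  shows "M_stationary \<phi> \<Phi> yb xb"
proof -
  from assms(4) have ybx: "yb \<in> \<Phi> xb" unfolding local_minimizer_P_def by blast
  from assms(4) obtain d1 where d1: "d1 > 0" and locmin: "\<And>x. yb \<in> \<Phi> x \<Longrightarrow> dist x xb < d1 \<Longrightarrow> \<phi> xb \<le> \<phi> x"
    unfolding local_minimizer_P_def by blast
  from assms(1) obtain d0 L0 where d0: "d0 > 0" and lip0: "L0-lipschitz_on (ball xb d0) \<phi>"
    unfolding locally_lipschitz_def by blast
  define L where "L = L0 + 1"
  have L0: "L0 \<ge> 0" using lip0 unfolding lipschitz_on_def by simp
  hence Lpos: "L > 0" unfolding L_def by simp
  have lipL: "L-lipschitz_on (ball xb d0) \<phi>" using lipschitz_on_le[OF lip0] L_def by simp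
  have contphi: "continuous_on (ball xb d0) \<phi>" using lipschitz_on_continuous_on[OF lipL] .
  define \<delta> where "\<delta> = min (d0/4) (d1/2)"
  have \<delta>pos: "\<delta> > 0" and \<delta>d0: "2*\<delta> < d0" and \<delta>d1: "\<delta> < d1" using d0 d1 unfolding \<delta>_def by auto
  have inball: "\<And>p. norm (p - xb) \<le> 2*\<delta> \<Longrightarrow> p \<in> ball xb d0"
    using \<delta>d0 by (simp add: dist_norm norm_minus_commute)
  have lip: "\<phi> p - \<phi> q \<le> L * norm (p - q)" if "norm (p - xb) \<le> 2*\<delta>" "norm (q - xb) \<le> 2*\<delta>" for p q
  proof -
    have "p \<in> ball xb d0" "q \<in> ball xb d0" using inball that by auto
    hence "dist (\<phi> p) (\<phi> q) \<le> L * dist p q" using lipL unfolding lipschitz_on_def by blast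
    thus "\<phi> p - \<phi> q \<le> L * norm (p - q)" by (simp add: dist_norm dist_real_def abs_le_iff)
  qed
  define c :: "nat \<Rightarrow> real" where "c k = real k + 1 + L/\<delta>" for k
  have cpos: "c k > 0" for k unfolding c_def using Lpos \<delta>pos by (simp add: add_pos_nonneg)
  have cge: "L / c k \<le> \<delta>" for k
  proof -
    have "L/\<delta> \<le> c k" unfolding c_def by simp
    hence "L \<le> c k * \<delta>" using \<delta>pos by (simp add: pos_divide_le_eq)
    thus ?thesis using cpos[of k] by (simp add: pos_divide_le_eq mult.commute)
  qed
  have clim: "(\<lambda>k. 1 / c k) \<longlonglongrightarrow> 0"
  proof (rule Lim_null_comparison[OF _ LIMSEQ_inverse_real_of_nat])
    show "\<forall>\<^sub>F k in sequentially. norm (1 / c k) \<le> inverse (real (Suc k))"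
    proof (intro always_eventually allI)
      fix k
      have "real (Suc k) \<le> c k" unfolding c_def using Lpos \<delta>pos by simp
      thus "norm (1 / c k) \<le> inverse (real (Suc k))" using cpos[of k]
        by (simp add: divide_simps)
    qed
  qed
  have Lclim: "(\<lambda>k. L / c k) \<longlonglongrightarrow> 0"
    using tendsto_mult[OF tendsto_const[of L] clim] by simp

  define K where "K = cball xb (2*\<delta>) \<times> (gph \<Phi> \<inter> (cball xb \<delta> \<times> cball yb 1))"
  define F where "F k p = \<phi> (fst p) + c k * (norm (fst (snd p) - fst p)^2 + norm (snd (snd p) - yb)^2)
      + norm (fst (snd p) - xb)^2" for k p
  have Kc: "compact K" unfolding K_def
    by (intro compact_Times compact_cball closed_Int_compact assms(2))
  have memK: "(zz, xx, yy) \<in> K \<longleftrightarrow> norm (zz - xb) \<le> 2*\<delta> \<and> yy \<in> \<Phi> xx \<and> norm (xx - xb) \<le> \<delta> \<and> norm (yy - yb) \<le> 1"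
    for zz xx yy unfolding K_def gph_def by (auto simp: dist_norm norm_minus_commute)
  have Kne: "(xb, xb, yb) \<in> K" using memK ybx \<delta>pos by simp
  have Fcont: "continuous_on K (F k)" for k
  proof -
    have "continuous_on K (\<lambda>p. \<phi> (fst p))"
    proof (rule continuous_on_compose2[OF contphi continuous_on_fst[OF continuous_on_id]])
      show "fst ` K \<subseteq> ball xb d0"
      proof
        fix q assume "q \<in> fst ` K"
        then obtain zz xx yy where "(zz,xx,yy) \<in> K" "q = zz" by force
        thus "q \<in> ball xb d0" using memK inball by blast
      qed
    qed
    thus ?thesis unfolding F_def by (intro continuous_intros)
  qed
  have "\<forall>k. \<exists>p\<in>K. \<forall>q\<in>K. F k p \<le> F k q"
    using continuous_attains_inf[OF Kc _ Fcont] Kne by blast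
  then obtain p where pK: "\<And>k. p k \<in> K" and pmin: "\<And>k q. q \<in> K \<Longrightarrow> F k (p k) \<le> F k q"
    by metis
  define z where "z k = fst (p k)" for k
  define x where "x k = fst (snd (p k))" for k
  define y where "y k = snd (snd (p k))" for k
  have pk: "p k = (z k, x k, y k)" for k by (simp add: z_def x_def y_def)
  have zK: "norm (z k - xb) \<le> 2*\<delta>" and gr: "y k \<in> \<Phi> (x k)" and xK: "norm (x k - xb) \<le> \<delta>"
     and yK: "norm (y k - yb) \<le> 1" for k using pK[of k] unfolding pk memK by auto
  have minF: "\<phi> (z k) + c k * (norm (x k - z k)^2 + norm (y k - yb)^2) + norm (x k - xb)^2
     \<le> \<phi> z' + c k * (norm (x' - z')^2 + norm (y' - yb)^2) + norm (x' - xb)^2"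
    if "norm (z' - xb) \<le> 2*\<delta>" "y' \<in> \<Phi> x'" "norm (x' - xb) \<le> \<delta>" "norm (y' - yb) \<le> 1" for k z' x' y'
    using pmin[of "(z',x',y')" k] that unfolding memK by (simp add: F_def pk)
  define d where "d k = norm (x k - z k)" for k
  define s where "s k = norm (y k - yb)" for k
  define t where "t k = norm (x k - xb)" for k
  have dge: "d k \<ge> 0" "s k \<ge> 0" "t k \<ge> 0" for k unfolding d_def s_def t_def by auto

  have E5: "\<phi> (x k) \<le> \<phi> (z k) + L * d k" for k
    using lip[of "x k" "z k"] xK[of k] zK[of k] \<delta>pos unfolding d_def by auto
  have E1: "d k \<le> L / c k" for k
  proof -
    have "\<phi> (z k) + c k * (d k^2 + s k^2) + t k^2 \<le> \<phi> (x k) + c k * (0 + s k^2) + t k^2"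
      using minF[where k=k and z'="x k" and x'="x k" and y'="y k"] xK[of k] gr[of k] yK[of k] \<delta>pos unfolding d_def s_def t_def by simp
    hence "c k * d k^2 \<le> L * d k" using E5[of k] by (simp add: algebra_simps)
    show ?thesis
    proof (cases "d k = 0")
      case True thus ?thesis using Lpos cpos[of k] by simp
    next
      case False
      hence dp: "d k > 0" using dge(1)[of k] by simp
      have "(c k * d k) * d k \<le> L * d k" using \<open>c k * d k^2 \<le> L * d k\<close> by (simp add: power2_eq_square mult.assoc)
      hence "c k * d k \<le> L" using dp by (simp add: mult_le_cancel_right)
      thus ?thesis using cpos[of k] by (simp add: pos_le_divide_eq mult.commute)
    qed
  qed
  have E3: "\<phi> (z k) + c k * (d k^2 + s k^2) + t k^2 \<le> \<phi> xb" for k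
    using minF[where k=k and z'=xb and x'=xb and y'=yb] ybx \<delta>pos unfolding d_def s_def t_def by simp
  have E2: "c k * s k^2 + t k^2 \<le> L * t k" for k
  proof -
    define z' where "z' = z k + xb - x k"
    have nz: "norm (z' - xb) = d k" unfolding z'_def d_def by (simp add: norm_minus_commute algebra_simps)
    hence nz2: "norm (z' - xb) \<le> 2*\<delta>" using E1[of k] cge[of k] \<delta>pos by simp
    have "\<phi> (z k) + c k * (d k^2 + s k^2) + t k^2 \<le> \<phi> z' + c k * (norm (xb - z')^2 + 0) + 0"
      using minF[where k=k and z'=z' and x'=xb and y'=yb] nz2 ybx \<delta>pos unfolding d_def s_def t_def by simp
    moreover have "norm (xb - z') = d k" using nz by (simp add: norm_minus_commute)
    moreover have "\<phi> z' - \<phi> (z k) \<le> L * t k"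
    proof -
      have "\<phi> z' - \<phi> (z k) \<le> L * norm (z' - z k)" using lip[OF nz2 zK[of k]] .
      moreover have "z' - z k = xb - x k" unfolding z'_def by simp
      ultimately show ?thesis unfolding t_def by (simp add: norm_minus_commute)
    qed
    ultimately show ?thesis by (simp add: algebra_simps)
  qed
  have E4: "y k = yb" if "yb \<in> \<Phi> (x k)" for k
  proof -
    have "\<phi> (z k) + c k * (d k^2 + s k^2) + t k^2 \<le> \<phi> (z k) + c k * (d k^2 + 0) + t k^2"
      using minF[where k=k and z'="z k" and x'="x k" and y'=yb] that zK[of k] xK[of k] unfolding d_def s_def t_def by simp
    hence "c k * s k^2 \<le> 0" by (simp add: algebra_simps)
    hence "s k^2 \<le> 0" using cpos[of k] by (simp add: mult_le_0_iff)
    hence "s k = 0" by simp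
    thus ?thesis unfolding s_def by simp
  qed
  have csnn: "0 \<le> c k * s k^2" for k using cpos[of k] by simp
  have tL: "t k \<le> L" for k
  proof -
    have "t k^2 \<le> L * t k" using E2[of k] csnn[of k] by linarith
    hence tt: "t k * t k \<le> L * t k" by (simp add: power2_eq_square)
    show ?thesis
    proof (cases "t k = 0")
      case True thus ?thesis using Lpos by simp
    next
      case False hence "t k > 0" using dge(3)[of k] by simp
      thus ?thesis using tt by (simp add: mult_le_cancel_right)
    qed
  qed
  have s2: "s k^2 \<le> L * L * (1 / c k)" for k
  proof -
    have "L * t k \<le> L * L" using tL[of k] Lpos by (simp add: mult_left_mono)
    moreover have "t k^2 \<ge> 0" by simp
    ultimately have "c k * s k^2 \<le> L * L" using E2[of k] by linarith
    hence "s k^2 * c k \<le> L * L" by (simp add: mult.commute)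
    hence "s k^2 \<le> (L * L) / c k" using cpos[of k] by (simp add: pos_le_divide_eq)
    thus ?thesis by simp
  qed
  have dlim: "d \<longlonglongrightarrow> 0"
    by (rule Lim_null_comparison[OF _ Lclim]) (use E1 dge in auto)
  have slim: "s \<longlonglongrightarrow> 0"
  proof (rule Lim_null_comparison)
    show "\<forall>\<^sub>F k in sequentially. norm (s k) \<le> sqrt (L * L * (1 / c k))"
    proof (intro always_eventually allI)
      fix k show "norm (s k) \<le> sqrt (L * L * (1 / c k))" using real_le_rsqrt[OF s2[of k]] dge(2)[of k] by simp
    qed
    show "(\<lambda>k. sqrt (L * L * (1 / c k))) \<longlonglongrightarrow> 0"
      using tendsto_real_sqrt[OF tendsto_mult[OF tendsto_const clim]] by simp
  qed
  have tlim: "t \<longlonglongrightarrow> 0"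
  proof (rule ccontr)
    assume "\<not> t \<longlonglongrightarrow> 0"
    then obtain \<eta> where \<eta>: "\<eta> > 0" and ne: "\<not> (\<forall>\<^sub>F k in sequentially. dist (t k) 0 < \<eta>)"
      unfolding tendsto_iff by blast
    have "\<exists>\<^sub>F k in sequentially. \<not> dist (t k) 0 < \<eta>" using ne by (simp add: not_eventually)
    hence "\<exists>\<^sub>F k in sequentially. \<eta> \<le> t k"
      by (rule frequently_elim1) (use dge in \<open>auto simp: dist_real_def\<close>)
    then obtain r :: "nat \<Rightarrow> nat" where r: "strict_mono r" and rt: "\<And>k. \<eta> \<le> t (r k)"
      using frequently_subseq by blast
    have "range (x \<circ> r) \<subseteq> cball xb \<delta>" using xK by (auto simp: dist_norm norm_minus_commute)
    hence "bounded (range (x \<circ> r))" using bounded_cball bounded_subset by blast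
    then obtain x' r' where r': "strict_mono r'" and xr: "((x \<circ> r) \<circ> r') \<longlonglongrightarrow> x'"
      using bounded_imp_convergent_subsequence by blast
    define \<sigma> where "\<sigma> = r \<circ> r'"
    have \<sigma>: "strict_mono \<sigma>" unfolding \<sigma>_def using strict_mono_o[OF r r'] .
    have x\<sigma>: "(\<lambda>k. x (\<sigma> k)) \<longlonglongrightarrow> x'" using xr unfolding \<sigma>_def by (simp add: o_def)
    have "(\<lambda>k. y k - yb) \<longlonglongrightarrow> 0" using slim unfolding s_def by (simp add: tendsto_norm_zero_iff)
    hence ylim: "y \<longlonglongrightarrow> yb" by (simp add: LIM_zero_iff)
    have y\<sigma>: "(\<lambda>k. y (\<sigma> k)) \<longlonglongrightarrow> yb" using LIMSEQ_subseq_LIMSEQ[OF ylim \<sigma>] by (simp add: o_def)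
    have "(\<lambda>k. x k - z k) \<longlonglongrightarrow> 0" using dlim unfolding d_def by (simp add: tendsto_norm_zero_iff)
    hence xz0: "(\<lambda>k. x (\<sigma> k) - z (\<sigma> k)) \<longlonglongrightarrow> 0" using LIMSEQ_subseq_LIMSEQ[OF _ \<sigma>] by (simp add: o_def)
    have z\<sigma>: "(\<lambda>k. z (\<sigma> k)) \<longlonglongrightarrow> x'" using tendsto_diff[OF x\<sigma> xz0] by simp
    have x'K: "norm (x' - xb) \<le> \<delta>"
      by (rule Lim_norm_ubound[OF _ tendsto_diff[OF x\<sigma> tendsto_const[of xb]]]) (use xK in auto)
    have "(x', yb) \<in> gph \<Phi>"
      by (rule closed_sequentially[OF assms(2) _ tendsto_Pair[OF x\<sigma> y\<sigma>]]) (use gr in \<open>auto simp: gph_def\<close>)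
    hence "yb \<in> \<Phi> x'" by (simp add: gph_def)
    moreover have "dist x' xb < d1" using x'K \<delta>d1 by (simp add: dist_norm)
    ultimately have A: "\<phi> xb \<le> \<phi> x'" using locmin by blast
    have "(\<lambda>k. \<phi> (z (\<sigma> k))) \<longlonglongrightarrow> \<phi> x'"
      by (rule continuous_on_tendsto_compose[OF contphi z\<sigma>]) (use x'K \<delta>pos inball zK in auto)
    moreover have "\<phi> (z (\<sigma> k)) \<le> \<phi> xb - \<eta>^2" for k
    proof -
      have "\<eta> \<le> t (\<sigma> k)" using rt unfolding \<sigma>_def by simp
      hence "\<eta>^2 \<le> t (\<sigma> k)^2" using \<eta> by (simp add: power_mono)
      moreover have "0 \<le> c (\<sigma> k) * (d (\<sigma> k)^2 + s (\<sigma> k)^2)" using cpos[of "\<sigma> k"] by simp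
      ultimately show ?thesis using E3[of "\<sigma> k"] by linarith
    qed
    ultimately have "\<phi> x' \<le> \<phi> xb - \<eta>^2" by (intro LIMSEQ_le_const2) auto
    moreover have "\<eta>^2 > 0" using \<eta> by simp
    ultimately show False using A by linarith
  qed
  have xlim: "x \<longlonglongrightarrow> xb"
  proof -
    have "(\<lambda>k. x k - xb) \<longlonglongrightarrow> 0" using tlim unfolding t_def by (simp add: tendsto_norm_zero_iff)
    thus ?thesis by (simp add: LIM_zero_iff)
  qed
  have ylim: "y \<longlonglongrightarrow> yb"
  proof -
    have "(\<lambda>k. y k - yb) \<longlonglongrightarrow> 0" using slim unfolding s_def by (simp add: tendsto_norm_zero_iff)
    thus ?thesis by (simp add: LIM_zero_iff)
  qed
  have zlim: "z \<longlonglongrightarrow> xb"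
  proof -
    have "(\<lambda>k. x k - z k) \<longlonglongrightarrow> 0" using dlim unfolding d_def by (simp add: tendsto_norm_zero_iff)
    from tendsto_diff[OF xlim this] show ?thesis by simp
  qed
  have zn: "(\<lambda>k. norm (z k - xb)) \<longlonglongrightarrow> 0"
  proof -
    have "(\<lambda>k. z k - xb) \<longlonglongrightarrow> 0" using zlim by (simp add: LIM_zero_iff)
    thus ?thesis by (simp add: tendsto_norm_zero_iff)
  qed
  define good where "good k \<longleftrightarrow> t k < \<delta> \<and> s k < 1 \<and> norm (z k - xb) < 2*\<delta>" for k
  have evgood: "\<forall>\<^sub>F k in sequentially. good k"
  proof -
    have "\<forall>\<^sub>F k in sequentially. t k < \<delta>" using order_tendstoD(2)[OF tlim \<delta>pos] .
    moreover have "\<forall>\<^sub>F k in sequentially. s k < 1" using order_tendstoD(2)[OF slim] by simp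
    moreover have "\<forall>\<^sub>F k in sequentially. norm (z k - xb) < 2*\<delta>" using order_tendstoD(2)[OF zn] \<delta>pos by simp
    ultimately show ?thesis unfolding good_def by eventually_elim auto
  qed
  define g where "g k = (2 * c k) *\<^sub>R (x k - z k)" for k
  define lam where "lam k = (2 * c k) *\<^sub>R (y k - yb)" for k
  define xs where "xs k = - ((2 * c k) *\<^sub>R (x k - z k)) - 2 *\<^sub>R (x k - xb)" for k
  have gsub: "g k \<in> reg_subdiff \<phi> (z k)" if gk: "good k" for k
    unfolding g_def
  proof (rule reg_subdiff_of_min[where c="c k" and r="2*\<delta> - norm (z k - xb)" and z="z k" and x="x k"])
    show "0 < c k" by (rule cpos)
    show "0 < 2*\<delta> - norm (z k - xb)" using gk unfolding good_def by simp
    fix w assume w: "norm (w - z k) < 2*\<delta> - norm (z k - xb)"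
    have "norm (w - xb) \<le> norm (w - z k) + norm (z k - xb)" using norm_triangle_ineq[of "w - z k" "z k - xb"] by simp
    hence wK: "norm (w - xb) \<le> 2*\<delta>" using w by simp
    have "\<phi> (z k) + c k * (norm (x k - z k)^2 + norm (y k - yb)^2) + norm (x k - xb)^2
        \<le> \<phi> w + c k * (norm (x k - w)^2 + norm (y k - yb)^2) + norm (x k - xb)^2"
      using minF[where k=k and z'=w and x'="x k" and y'="y k"] wK gr xK yK by blast
    thus "\<phi> (z k) + c k * norm (x k - z k)^2 \<le> \<phi> w + c k * norm (x k - w)^2" by (simp add: algebra_simps)
  qed
  have xsN: "(xs k, - lam k) \<in> reg_normal_cone (gph \<Phi>) (x k, y k)" if gk: "good k" for k
  proof -
    have eq: "(xs k, - lam k) = (-((2*c k) *\<^sub>R (x k - z k)) - 2 *\<^sub>R (x k - xb), -((2*c k) *\<^sub>R (y k - yb)))"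
      unfolding xs_def lam_def by simp
    show ?thesis unfolding eq
    proof (rule reg_normal_of_min[where c="c k" and r="min (\<delta> - t k) (1 - s k)" and z="z k"])
      show "0 < c k" by (rule cpos)
      show "(x k, y k) \<in> gph \<Phi>" using gr by (simp add: gph_def)
      show "0 < min (\<delta> - t k) (1 - s k)" using gk unfolding good_def by simp
      fix x' y' assume xy': "(x', y') \<in> gph \<Phi>" and nr: "norm ((x', y') - (x k, y k)) < min (\<delta> - t k) (1 - s k)"
      have n1: "norm (x' - x k) < \<delta> - t k" using nr norm_fst_le[of "x' - x k" "y' - y k"] by simp
      have n2: "norm (y' - y k) < 1 - s k" using nr norm_snd_le[of "y' - y k" "x' - x k"] by simp
      have "norm (x' - xb) \<le> \<delta>" using norm_triangle_ineq[of "x' - x k" "x k - xb"] n1 unfolding t_def by simp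
      moreover have "norm (y' - yb) \<le> 1" using norm_triangle_ineq[of "y' - y k" "y k - yb"] n2 unfolding s_def by simp
      moreover have "y' \<in> \<Phi> x'" using xy' by (simp add: gph_def)
      ultimately have "\<phi> (z k) + c k * (norm (x k - z k)^2 + norm (y k - yb)^2) + norm (x k - xb)^2
         \<le> \<phi> (z k) + c k * (norm (x' - z k)^2 + norm (y' - yb)^2) + norm (x' - xb)^2"
        using minF[where k=k and z'="z k" and x'=x' and y'=y'] zK by blast
      thus "c k * (norm (x k - z k)^2 + norm (y k - yb)^2) + norm (x k - xb)^2
         \<le> c k * (norm (x' - z k)^2 + norm (y' - yb)^2) + norm (x' - xb)^2" by simp
    qed
  qed
  have xscod: "xs k \<in> reg_coderiv \<Phi> (x k) (y k) (lam k)" if "good k" for k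
    unfolding reg_coderiv_def using xsN[OF that] by simp
  have gnorm: "norm (g k) \<le> 2*L" for k
  proof -
    have "norm (g k) = 2 * c k * d k" unfolding g_def d_def using cpos[of k] by simp
    also have "\<dots> \<le> 2 * c k * (L / c k)" using E1[of k] cpos[of k] by (intro mult_left_mono) auto
    also have "\<dots> = 2 * L" using cpos[of k] by simp
    finally show ?thesis .
  qed
  have lamnorm: "norm (lam k) = 2 * c k * s k" for k
    unfolding lam_def s_def using cpos[of k] by simp
  have LS: "gs \<in> lim_subdiff \<phi> xb" if \<sigma>: "strict_mono \<sigma>" and gl: "(\<lambda>k. g (\<sigma> k)) \<longlonglongrightarrow> gs"
     and gd: "\<forall>k. good (\<sigma> k)" for \<sigma> gs
  proof -
    have zs: "(\<lambda>k. z (\<sigma> k)) \<longlonglongrightarrow> xb" using LIMSEQ_subseq_LIMSEQ[OF zlim \<sigma>] by (simp add: o_def)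
    have "(\<lambda>k. \<phi> (z (\<sigma> k))) \<longlonglongrightarrow> \<phi> xb"
      by (rule continuous_on_tendsto_compose[OF contphi zs]) (use d0 inball zK in auto)
    thus ?thesis unfolding lim_subdiff_def using zs gl gsub gd
      by (intro CollectI exI[of _ "\<lambda>k. z (\<sigma> k)"] exI[of _ "\<lambda>k. g (\<sigma> k)"] conjI allI) auto
  qed
  have XS: "(\<lambda>k. xs (\<sigma> k)) \<longlonglongrightarrow> - gs" if \<sigma>: "strict_mono \<sigma>" and gl: "(\<lambda>k. g (\<sigma> k)) \<longlonglongrightarrow> gs" for \<sigma> gs
  proof -
    have "(\<lambda>k. x (\<sigma> k)) \<longlonglongrightarrow> xb" using LIMSEQ_subseq_LIMSEQ[OF xlim \<sigma>] by (simp add: o_def)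
    hence "(\<lambda>k. x (\<sigma> k) - xb) \<longlonglongrightarrow> 0" by (simp add: LIM_zero_iff)
    hence "(\<lambda>k. - g (\<sigma> k) - 2 *\<^sub>R (x (\<sigma> k) - xb)) \<longlonglongrightarrow> - gs - 2 *\<^sub>R 0"
      by (intro tendsto_intros gl)
    thus ?thesis by (simp add: xs_def g_def)
  qed
  show ?thesis
  proof (cases "\<exists>B. \<exists>\<^sub>F k in sequentially. good k \<and> norm (lam k) \<le> B")
    case True
    then obtain B where "\<exists>\<^sub>F k in sequentially. good k \<and> norm (lam k) \<le> B" by blast
    then obtain r :: "nat \<Rightarrow> nat" where r: "strict_mono r" and rg: "\<And>k. good (r k) \<and> norm (lam (r k)) \<le> B"
      using frequently_subseq by blast
    have "range (\<lambda>k. (g (r k), lam (r k))) \<subseteq> cball 0 (2*L) \<times> cball 0 B" using gnorm rg by auto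
    hence "bounded (range (\<lambda>k. (g (r k), lam (r k))))"
      by (rule bounded_subset[OF bounded_Times[OF bounded_cball bounded_cball]])
    then obtain l r' where r': "strict_mono r'" and lr: "((\<lambda>k. (g (r k), lam (r k))) \<circ> r') \<longlonglongrightarrow> l"
      using bounded_imp_convergent_subsequence by blast
    obtain gs ls where l: "l = (gs, ls)" by force
    define \<sigma> where "\<sigma> = r \<circ> r'"
    have \<sigma>: "strict_mono \<sigma>" unfolding \<sigma>_def using strict_mono_o[OF r r'] .
    have gd: "\<forall>k. good (\<sigma> k)" using rg unfolding \<sigma>_def by simp
    have gll: "(\<lambda>k. (g (\<sigma> k), lam (\<sigma> k))) \<longlonglongrightarrow> (gs, ls)" using lr unfolding l \<sigma>_def by (simp add: o_def)
    have gl: "(\<lambda>k. g (\<sigma> k)) \<longlonglongrightarrow> gs" using tendsto_fst[OF gll] by simp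
    have ll: "(\<lambda>k. lam (\<sigma> k)) \<longlonglongrightarrow> ls" using tendsto_snd[OF gll] by simp
    have A: "gs \<in> lim_subdiff \<phi> xb" using LS[OF \<sigma> gl gd] .
    have f1: "\<forall>k. (x (\<sigma> k), y (\<sigma> k)) \<in> gph \<Phi> \<and> (xs (\<sigma> k), - lam (\<sigma> k)) \<in> reg_normal_cone (gph \<Phi>) (x (\<sigma> k), y (\<sigma> k))"
      using gr xsN gd by (simp add: gph_def)
    have f2: "(\<lambda>k. (x (\<sigma> k), y (\<sigma> k))) \<longlonglongrightarrow> (xb, yb)"
      using tendsto_Pair[OF LIMSEQ_subseq_LIMSEQ[OF xlim \<sigma>] LIMSEQ_subseq_LIMSEQ[OF ylim \<sigma>]] by (simp add: o_def)
    have f3: "(\<lambda>k. (xs (\<sigma> k), - lam (\<sigma> k))) \<longlonglongrightarrow> (- gs, - ls)"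
      using tendsto_Pair[OF XS[OF \<sigma> gl] tendsto_minus[OF ll]] .
    have f0: "(xb, yb) \<in> gph \<Phi>" using ybx by (simp add: gph_def)
    have "(- gs, - ls) \<in> lim_normal_cone (gph \<Phi>) (xb, yb)"
      unfolding lim_normal_cone_def mem_Collect_eq
      apply (rule conjI[OF f0])
      apply (rule exI[of _ "\<lambda>k. (x (\<sigma> k), y (\<sigma> k))"], rule exI[of _ "\<lambda>k. (xs (\<sigma> k), - lam (\<sigma> k))"])
      using f1 f2 f3 by simp
    hence B: "- gs \<in> lim_coderiv \<Phi> xb yb ls" unfolding lim_coderiv_def by simp
    have "gs + - gs = 0" by simp
    thus ?thesis unfolding M_stationary_def using A B by blast
  next
    case False
    hence nf: "\<forall>\<^sub>F k in sequentially. \<not> (good k \<and> norm (lam k) \<le> B)" for B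
      by (simp add: not_frequently)
    have lamtop: "filterlim (\<lambda>k. norm (lam k)) at_top sequentially"
      unfolding filterlim_at_top
    proof (intro allI)
      fix B
      show "\<forall>\<^sub>F k in sequentially. B \<le> norm (lam k)"
        using eventually_conj[OF nf[of B] evgood] by (rule eventually_mono) auto
    qed
    have "\<forall>\<^sub>F k in sequentially. good k \<and> norm (lam k) > 0"
      using eventually_conj[OF nf[of 0] evgood] by (rule eventually_mono) auto
    then obtain r :: "nat \<Rightarrow> nat" where r: "strict_mono r" and rg: "\<And>k. good (r k) \<and> norm (lam (r k)) > 0"
      using frequently_subseq[OF eventually_frequently[OF sequentially_bot]] by blast
    define u where "u k = (1 / t k) *\<^sub>R (x k - xb)" for k
    define w where "w k = (s k / t k) *\<^sub>R lam k" for k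
    define v where "v k = (1 / t k) *\<^sub>R (y k - yb)" for k
    define \<alpha> where "\<alpha> k = 4 * L^3 * (inverse (norm (lam k)) * inverse (norm (lam k)))" for k
    have key: "c k * s k^2 \<le> L * t k" for k using E2[of k] by (smt (verit) zero_le_power2)
    have P: "s k > 0 \<and> yb \<notin> \<Phi> (x k) \<and> y k \<noteq> yb \<and> t k > 0" if "norm (lam k) > 0" for k
    proof -
      have sp: "s k > 0" using that lamnorm[of k] cpos[of k] dge(2)[of k] by (auto simp: zero_less_mult_iff)
      hence nyb: "yb \<notin> \<Phi> (x k)" using E4[of k] unfolding s_def by auto
      hence "x k \<noteq> xb" using ybx by auto
      hence "t k > 0" unfolding t_def by simp
      thus ?thesis using sp nyb unfolding s_def by auto
    qed
    have nu: "norm (u k) = 1" if "norm (lam k) > 0" for k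
      using P[OF that] unfolding u_def t_def by simp
    have nw: "norm (w k) \<le> 2*L" if "norm (lam k) > 0" for k
    proof -
      have sp: "s k > 0" and tp: "t k > 0" using P[OF that] by auto
      have "norm (w k) = (s k / t k) * (2 * c k * s k)" unfolding w_def using lamnorm[of k] sp tp by simp
      also have "\<dots> = 2 * (c k * s k^2) / t k" by (simp add: power2_eq_square)
      also have "\<dots> \<le> 2 * (L * t k) / t k" using key[of k] tp by (intro divide_right_mono) auto
      also have "\<dots> = 2 * L" using tp by simp
      finally show ?thesis .
    qed
    have nv: "norm (v k) \<le> 2 * L * inverse (norm (lam k))" if "norm (lam k) > 0" for k
    proof -
      have sp: "s k > 0" and tp: "t k > 0" using P[OF that] by auto
      have cp: "c k > 0" by (rule cpos)
      have "norm (v k) = s k / t k" unfolding v_def s_def using tp by simp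
      also have "\<dots> \<le> 2 * L * inverse (2 * c k * s k)"
        using key[of k] sp tp cp by (simp add: field_simps power2_eq_square)
      finally show ?thesis using lamnorm[of k] by simp
    qed
    have crit_ineq: "\<phi> (x k) \<le> \<phi> xb + t k * \<alpha> k" if "norm (lam k) > 0" for k
    proof -
      have sp: "s k > 0" and tp: "t k > 0" using P[OF that] by auto
      have cp: "c k > 0" by (rule cpos)
      have "\<phi> (z k) \<le> \<phi> xb" using E3[of k] cp by (smt (verit) zero_le_power2 mult_nonneg_nonneg)
      hence "\<phi> (x k) \<le> \<phi> xb + L * d k" using E5[of k] by simp
      also have "L * d k \<le> L * (L / c k)" using E1[of k] Lpos by (intro mult_left_mono) auto
      also have "L * (L / c k) \<le> t k * \<alpha> k"
      proof -
        have "4 * L^2 * c k * (c k * s k^2) \<le> 4 * L^2 * c k * (L * t k)"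
          using key[of k] cp by (intro mult_left_mono) auto
        thus ?thesis unfolding \<alpha>_def lamnorm using sp tp cp Lpos
          by (simp add: field_simps power2_eq_square power3_eq_cube)
      qed
      finally show ?thesis by simp
    qed
    have "range (\<lambda>k. (g (r k), u (r k), w (r k))) \<subseteq> cball 0 (2*L) \<times> cball 0 1 \<times> cball 0 (2*L)"
      using gnorm rg nu nw by auto
    hence "bounded (range (\<lambda>k. (g (r k), u (r k), w (r k))))"
      by (rule bounded_subset[OF bounded_Times[OF bounded_cball bounded_Times[OF bounded_cball bounded_cball]]])
    then obtain l r' where r': "strict_mono r'" and lr: "((\<lambda>k. (g (r k), u (r k), w (r k))) \<circ> r') \<longlonglongrightarrow> l"
      using bounded_imp_convergent_subsequence by blast
    obtain gs us ws where l: "l = (gs, us, ws)" by (cases l) auto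
    define \<sigma> where "\<sigma> = r \<circ> r'"
    have \<sigma>: "strict_mono \<sigma>" unfolding \<sigma>_def using strict_mono_o[OF r r'] .
    have gd: "\<And>k. good (\<sigma> k)" and lp: "\<And>k. norm (lam (\<sigma> k)) > 0" using rg unfolding \<sigma>_def by auto
    have gll: "(\<lambda>k. (g (\<sigma> k), u (\<sigma> k), w (\<sigma> k))) \<longlonglongrightarrow> (gs, us, ws)" using lr unfolding l \<sigma>_def by (simp add: o_def)
    have gl: "(\<lambda>k. g (\<sigma> k)) \<longlonglongrightarrow> gs" using tendsto_fst[OF gll] by simp
    have ul: "(\<lambda>k. u (\<sigma> k)) \<longlonglongrightarrow> us" using tendsto_fst[OF tendsto_snd[OF gll]] by simp
    have wl: "(\<lambda>k. w (\<sigma> k)) \<longlonglongrightarrow> ws" using tendsto_snd[OF tendsto_snd[OF gll]] by simp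
    have lamtop\<sigma>: "filterlim (\<lambda>k. norm (lam (\<sigma> k))) at_top sequentially"
      using filterlim_compose[OF lamtop filterlim_subseq[OF \<sigma>]] .
    have inv0: "(\<lambda>k. inverse (norm (lam (\<sigma> k)))) \<longlonglongrightarrow> 0" using tendsto_inverse_0_at_top[OF lamtop\<sigma>] .
    have nus: "norm us = 1"
    proof -
      have "(\<lambda>k. norm (u (\<sigma> k))) \<longlonglongrightarrow> norm us" using tendsto_norm[OF ul] .
      moreover have "(\<lambda>k. norm (u (\<sigma> k))) = (\<lambda>k. 1)" using nu lp by auto
      ultimately show ?thesis using LIMSEQ_unique tendsto_const by metis
    qed
    have vl: "(\<lambda>k. v (\<sigma> k)) \<longlonglongrightarrow> 0"
    proof (rule Lim_null_comparison)
      show "\<forall>\<^sub>F k in sequentially. norm (v (\<sigma> k)) \<le> 2 * L * inverse (norm (lam (\<sigma> k)))"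
        using nv lp by auto
      show "(\<lambda>k. 2 * L * inverse (norm (lam (\<sigma> k)))) \<longlonglongrightarrow> 0"
        using tendsto_mult[OF tendsto_const inv0] by simp
    qed
    have \<alpha>l: "(\<lambda>k. \<alpha> (\<sigma> k)) \<longlonglongrightarrow> 0"
      unfolding \<alpha>_def using tendsto_mult[OF tendsto_const tendsto_mult[OF inv0 inv0]] by simp
    have tl: "(\<lambda>k. t (\<sigma> k)) \<longlonglongrightarrow> 0" using LIMSEQ_subseq_LIMSEQ[OF tlim \<sigma>] by (simp add: o_def)
    have tp: "t (\<sigma> k) > 0" for k using P[OF lp[of k]] by auto
    have ex: "xb + t (\<sigma> k) *\<^sub>R u (\<sigma> k) = x (\<sigma> k)" for k unfolding u_def using tp[of k] by simp
    have ey: "yb + (t (\<sigma> k) * norm (u (\<sigma> k))) *\<^sub>R v (\<sigma> k) = y (\<sigma> k)" for k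
      unfolding v_def using tp[of k] nu[OF lp[of k]] by simp
    have C2: "\<phi> (xb + t (\<sigma> k) *\<^sub>R u (\<sigma> k)) \<le> \<phi> xb + t (\<sigma> k) * norm (u (\<sigma> k)) * \<alpha> (\<sigma> k) \<and>
       yb + (t (\<sigma> k) * norm (u (\<sigma> k))) *\<^sub>R v (\<sigma> k) \<in> \<Phi> (xb + t (\<sigma> k) *\<^sub>R u (\<sigma> k))" for k
      unfolding ey unfolding ex using crit_ineq[OF lp[of k]] gr[of "\<sigma> k"] nu[OF lp[of k]] by simp
    have crit: "critical_direction \<phi> \<Phi> yb xb us"
      unfolding critical_direction_def
      apply (rule exI[of _ "\<lambda>k. u (\<sigma> k)"], rule exI[of _ "\<lambda>k. \<alpha> (\<sigma> k)"], rule exI[of _ "\<lambda>k. v (\<sigma> k)"], rule exI[of _ "\<lambda>k. t (\<sigma> k)"])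
      using ul \<alpha>l vl tl tp C2 by blast
    have AR: "asymptotically_regular \<Phi> xb yb us" using assms(5)[OF nus crit] .
    have D1: "y (\<sigma> k) \<in> \<Phi> (x (\<sigma> k)) \<and> yb \<notin> \<Phi> (x (\<sigma> k)) \<and> y (\<sigma> k) \<noteq> yb \<and>
        xs (\<sigma> k) \<in> reg_coderiv \<Phi> (x (\<sigma> k)) (y (\<sigma> k)) (lam (\<sigma> k))" for k
      using gr[of "\<sigma> k"] P[OF lp[of k]] xscod[OF gd[of k]] by auto
    have D2: "(\<lambda>k. x (\<sigma> k)) \<longlonglongrightarrow> xb" using LIMSEQ_subseq_LIMSEQ[OF xlim \<sigma>] by (simp add: o_def)
    have D3: "(\<lambda>k. y (\<sigma> k)) \<longlonglongrightarrow> yb" using LIMSEQ_subseq_LIMSEQ[OF ylim \<sigma>] by (simp add: o_def)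
    have D4: "(\<lambda>k. xs (\<sigma> k)) \<longlonglongrightarrow> - gs" by (rule XS[OF \<sigma> gl])
    have "(\<lambda>k. (1 / norm (x (\<sigma> k) - xb)) *\<^sub>R (x (\<sigma> k) - xb)) = (\<lambda>k. u (\<sigma> k))"
      unfolding u_def t_def by simp
    hence D5: "(\<lambda>k. (1 / norm (x (\<sigma> k) - xb)) *\<^sub>R (x (\<sigma> k) - xb)) \<longlonglongrightarrow> us" using ul by simp
    have "(\<lambda>k. (1 / norm (x (\<sigma> k) - xb)) *\<^sub>R (y (\<sigma> k) - yb)) = (\<lambda>k. v (\<sigma> k))"
      unfolding v_def t_def by simp
    hence D6: "(\<lambda>k. (1 / norm (x (\<sigma> k) - xb)) *\<^sub>R (y (\<sigma> k) - yb)) \<longlonglongrightarrow> 0" using vl by simp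
    have "(\<lambda>k. (norm (y (\<sigma> k) - yb) / norm (x (\<sigma> k) - xb)) *\<^sub>R lam (\<sigma> k)) = (\<lambda>k. w (\<sigma> k))"
      unfolding w_def s_def t_def by simp
    hence D7: "(\<lambda>k. (norm (y (\<sigma> k) - yb) / norm (x (\<sigma> k) - xb)) *\<^sub>R lam (\<sigma> k)) \<longlonglongrightarrow> ws" using wl by simp
    have "(\<lambda>k. (1 / norm (y (\<sigma> k) - yb)) *\<^sub>R (y (\<sigma> k) - yb) - (1 / norm (lam (\<sigma> k))) *\<^sub>R lam (\<sigma> k)) = (\<lambda>k. 0)"
    proof
      fix k
      have sp: "s (\<sigma> k) > 0" using P[OF lp[of k]] by auto
      have cp: "c (\<sigma> k) > 0" by (rule cpos)
      show "(1 / norm (y (\<sigma> k) - yb)) *\<^sub>R (y (\<sigma> k) - yb) - (1 / norm (lam (\<sigma> k))) *\<^sub>R lam (\<sigma> k) = 0"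
        unfolding lamnorm using sp cp unfolding lam_def s_def by (simp add: scaleR_scaleR)
    qed
    hence D8: "(\<lambda>k. (1 / norm (y (\<sigma> k) - yb)) *\<^sub>R (y (\<sigma> k) - yb) - (1 / norm (lam (\<sigma> k))) *\<^sub>R lam (\<sigma> k)) \<longlonglongrightarrow> 0"
      by simp
    have "- gs \<in> im_lim_coderiv \<Phi> xb yb"
      apply (rule AR[unfolded asymptotically_regular_def, rule_format, where xk="\<lambda>k. x (\<sigma> k)" and yk="\<lambda>k. y (\<sigma> k)"
          and xsk="\<lambda>k. xs (\<sigma> k)" and lk="\<lambda>k. lam (\<sigma> k)" and xs="- gs" and ys=ws])
      using D1 D2 D3 D4 D5 D6 D7 D8 lamtop\<sigma> by blast
    then obtain ls where B: "- gs \<in> lim_coderiv \<Phi> xb yb ls" unfolding im_lim_coderiv_def by blast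
    have A: "gs \<in> lim_subdiff \<phi> xb" using LS[OF \<sigma> gl] gd by blast
    have "gs + - gs = 0" by simp
    thus ?thesis unfolding M_stationary_def using A B by blast
  qed
qed
end
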